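(* Let $\beta:[r]\to[n]$ be injective and $R\in L_n(T_R(\beta))$. If there exist $m$, $L\in L_m(P_m)$ and an increasing $\alpha:[r]\to[m]$ such that $L\,\Pi(\alpha,\beta)=\Pi(\alpha,\beta)\,R$, then $R=I_n$.
   Context: $\mathbb{F}$ is the field with two elements, $[n]=\{1,\dots,n\}$, $e_{n,i}$ standard basis column vectors, $I_n$ identity. $P_n=\{(i,j):i,j\in[n],i>j\}$; for transitive $T\subseteq P_n$, $L_n(T)=I_n+\mathrm{span}_{\mathbb{F}}\{e_{n,i}e_{n,j}^{\top}:(i,j)\in T\}$. $\Pi(\alpha,\beta)=\sum_{i=1}^re_{m,\alpha(i)}e_{n,\beta(i)}^{\top}$. For injective $\beta$, $T_R(\beta)=\{(i,j):i\in\mathrm{Im}(\beta),j<i,j\notin\{\beta(1),\dots,\beta(\beta^{-1}(i)-1)\}\}$ (a transitive subset of $P_n$). *)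

theory Defs
  imports "HOL-Library.Z2" "Jordan_Normal_Form.Matrix"
begin

text \<open>Matrices over the two-element field (type bit). Paper indices are 1-based;
  JNF matrix entries are 0-based, so paper entry (i,j) is entry (i-1,j-1).\<close>

definition Pset :: "nat \<Rightarrow> (nat \<times> nat) set" where
  "Pset n = {(i,j). i \<in> {1..n} \<and> j \<in> {1..n} \<and> i > j}"

text \<open>L_n(T) = I_n + span{E_ij : (i,j) in T}; the span of elementary matrices
  E_ij, (i,j) in T, is the set of n x n matrices supported on T.\<close>
definition Lset :: "nat \<Rightarrow> (nat \<times> nat) set \<Rightarrow> bit mat set" where
  "Lset n T = {1\<^sub>m n + M | M. M \<in> carrier_mat n n \<and>
      (\<forall>i<n. \<forall>j<n. M $$ (i,j) \<noteq> 0 \<longrightarrow> (Suc i, Suc j) \<in> T)}"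

definition PiMat :: "nat \<Rightarrow> nat \<Rightarrow> nat \<Rightarrow> (nat \<Rightarrow> nat) \<Rightarrow> (nat \<Rightarrow> nat) \<Rightarrow> bit mat" where
  "PiMat m n r \<alpha> \<beta> = mat m n (\<lambda>(a,b). \<Sum>k\<in>{1..r}. if \<alpha> k = Suc a \<and> \<beta> k = Suc b then 1 else 0)"

definition TR :: "nat \<Rightarrow> (nat \<Rightarrow> nat) \<Rightarrow> (nat \<times> nat) set" where
  "TR r \<beta> = {(i,j). \<exists>k\<in>{1..r}. i = \<beta> k \<and> 1 \<le> j \<and> j < i \<and> j \<notin> \<beta> ` {1..<k}}"

end

theory Submission
  imports Defs
begin

lemma PiMat_entry:
  assumes a: "a < m" and c: "c < n" and ia: "inj_on \<alpha> {1..r}" and ib: "inj_on \<beta> {1..r}"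
  shows "PiMat m n r \<alpha> \<beta> $$ (a,c) = (if \<exists>k\<in>{1..r}. \<alpha> k = Suc a \<and> \<beta> k = Suc c then 1 else 0)"
proof -
  have e: "PiMat m n r \<alpha> \<beta> $$ (a,c) = (\<Sum>k\<in>{1..r}. (if \<alpha> k = Suc a \<and> \<beta> k = Suc c then 1 else 0) :: bit)"
    unfolding PiMat_def by (simp only: index_mat(1) a c prod.case)
  show ?thesis
  proof (cases "\<exists>k\<in>{1..r}. \<alpha> k = Suc a \<and> \<beta> k = Suc c")
    case True
    then obtain k0 where k0: "k0 \<in> {1..r}" "\<alpha> k0 = Suc a" "\<beta> k0 = Suc c" by blast
    have "(\<Sum>k\<in>{1..r}. (if \<alpha> k = Suc a \<and> \<beta> k = Suc c then 1 else 0) :: bit)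
        = (\<Sum>k\<in>{1..r}. if k = k0 then 1 else 0)"
    proof (rule sum.cong)
      fix k assume "k \<in> {1..r}"
      then have "(\<alpha> k = Suc a \<and> \<beta> k = Suc c) = (k = k0)"
        using k0 ia unfolding inj_on_def by metis
      then show "(if \<alpha> k = Suc a \<and> \<beta> k = Suc c then 1 else 0) = (if k = k0 then 1 else (0::bit))"
        by simp
    qed (rule refl)
    also have "\<dots> = 1" using k0(1) by (simp only: sum.delta finite_atLeastAtMost if_True)
    finally show ?thesis using e True by simp
  next
    case False
    have "(\<Sum>k\<in>{1..r}. (if \<alpha> k = Suc a \<and> \<beta> k = Suc c then 1 else 0) :: bit) = 0"
      by (rule sum.neutral) (use False in auto)
    then show ?thesis using e False by simp
  qed
qed

theorem lemma5:
  fixes r n :: nat and \<beta> :: "nat \<Rightarrow> nat" and R :: "bit mat"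
  assumes "inj_on \<beta> {1..r}" and "\<beta> ` {1..r} \<subseteq> {1..n}"
    and "R \<in> Lset n (TR r \<beta>)"
    and "\<exists>m (L :: bit mat) \<alpha>. L \<in> Lset m (Pset m) \<and> \<alpha> ` {1..r} \<subseteq> {1..m}
           \<and> strict_mono_on {1..r} \<alpha>
           \<and> L * PiMat m n r \<alpha> \<beta> = PiMat m n r \<alpha> \<beta> * R"
  shows "R = 1\<^sub>m n"
proof -
  from assms(4) obtain m L \<alpha> where H: "L \<in> Lset m (Pset m) \<and> \<alpha> ` {1..r} \<subseteq> {1..m}
           \<and> strict_mono_on {1..r} \<alpha>
           \<and> L * PiMat m n r \<alpha> \<beta> = PiMat m n r \<alpha> \<beta> * R"
    by (elim exE) (rule that)
  have L: "L \<in> Lset m (Pset m)" using H by (elim conjE) assumption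
  have al: "\<alpha> ` {1..r} \<subseteq> {1..m}" using H by (elim conjE) assumption
  have sm: "strict_mono_on {1..r} \<alpha>" using H by (elim conjE) assumption
  have eq: "L * PiMat m n r \<alpha> \<beta> = PiMat m n r \<alpha> \<beta> * R" using H by (elim conjE) assumption
  from assms(3) obtain M where RM: "R = 1\<^sub>m n + M" and Mc: "M \<in> carrier_mat n n"
    and Ms: "\<And>i j. i<n \<Longrightarrow> j<n \<Longrightarrow> M $$ (i,j) \<noteq> 0 \<Longrightarrow> (Suc i, Suc j) \<in> TR r \<beta>"
    unfolding Lset_def by (elim CollectE exE conjE) (rule that, assumption+, blast)
  from L obtain N where LN: "L = 1\<^sub>m m + N" and Nc: "N \<in> carrier_mat m m"
    and Ns: "\<And>i j. i<m \<Longrightarrow> j<m \<Longrightarrow> N $$ (i,j) \<noteq> 0 \<Longrightarrow> (Suc i, Suc j) \<in> Pset m"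
    unfolding Lset_def by (elim CollectE exE conjE) (rule that, assumption+, blast)
  have ia: "inj_on \<alpha> {1..r}" using sm by (rule strict_mono_on_imp_inj_on)
  have ib: "inj_on \<beta> {1..r}" by (rule assms(1))
  have Rc: "R \<in> carrier_mat n n" using RM Mc by simp
  have Lc: "L \<in> carrier_mat m m" using LN Nc by simp
  let ?P = "PiMat m n r \<alpha> \<beta>"
  have Pc: "?P \<in> carrier_mat m n" by (simp add: PiMat_def)
  have M0: "M $$ (i,j) = 0" if ij: "i < n" "j < n" for i j
  proof (rule ccontr)
    assume nz: "M $$ (i,j) \<noteq> 0"
    from Ms[OF ij nz] obtain k where k: "k \<in> {1..r}" "Suc i = \<beta> k" "j < i"
      "Suc j \<notin> \<beta> ` {1..<k}" by (auto simp: TR_def)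
    have "\<alpha> k \<in> {1..m}" using al k(1) by blast
    then have ak: "1 \<le> \<alpha> k" "\<alpha> k \<le> m" by auto
    define a where "a = \<alpha> k - 1"
    have a: "a < m" "\<alpha> k = Suc a" using ak by (auto simp: a_def)
    have Rij: "R $$ (i,j) = M $$ (i,j)" using ij k(3) Mc RM by simp
    have "(?P * R) $$ (a,j) = (\<Sum>c\<in>{0..<n}. ?P $$ (a,c) * R $$ (c,j))"
    proof -
      have "(?P * R) $$ (a,j) = row ?P a \<bullet> col R j" using a ij Pc Rc by (intro index_mult_mat(1)) auto
      also have "\<dots> = (\<Sum>c\<in>{0..<n}. ?P $$ (a,c) * R $$ (c,j))"
        unfolding scalar_prod_def using Pc Rc a ij by (intro sum.cong) auto
      finally show ?thesis .
    qed
    also have "\<dots> = (\<Sum>c\<in>{0..<n}. if c = i then R $$ (c,j) else 0)"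
    proof (rule sum.cong, simp)
      fix c assume c: "c \<in> {0..<n}"
      have "(\<exists>k'\<in>{1..r}. \<alpha> k' = Suc a \<and> \<beta> k' = Suc c) \<longleftrightarrow> c = i"
      proof
        assume "\<exists>k'\<in>{1..r}. \<alpha> k' = Suc a \<and> \<beta> k' = Suc c"
        then obtain k' where k': "k' \<in> {1..r}" "\<alpha> k' = Suc a" "\<beta> k' = Suc c" by blast
        have "k' = k" using inj_onD[OF ia, of k' k] k'(1,2) k(1) a(2) by simp
        then show "c = i" using k(2) k'(3) by simp
      next
        assume "c = i" then show "\<exists>k'\<in>{1..r}. \<alpha> k' = Suc a \<and> \<beta> k' = Suc c"
          using k(1,2) a(2) by metis
      qed
      then show "?P $$ (a,c) * R $$ (c,j) = (if c = i then R $$ (c,j) else 0)"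
        using PiMat_entry[OF a(1) _ ia ib, of c] c by auto
    qed
    also have "\<dots> = M $$ (i,j)" using ij Rij by simp
    finally have lhs: "(?P * R) $$ (a,j) = M $$ (i,j)" .
    have rhs: "(L * ?P) $$ (a,j) = 0"
    proof -
      have e: "(L * ?P) $$ (a,j) = (\<Sum>c\<in>{0..<m}. L $$ (a,c) * ?P $$ (c,j))"
      proof -
        have "(L * ?P) $$ (a,j) = row L a \<bullet> col ?P j" using a ij Pc Lc by (intro index_mult_mat(1)) auto
        also have "\<dots> = (\<Sum>c\<in>{0..<m}. L $$ (a,c) * ?P $$ (c,j))"
          unfolding scalar_prod_def using Pc Lc a ij by (intro sum.cong) auto
        finally show ?thesis .
      qed
      show ?thesis
      proof (cases "\<exists>k'\<in>{1..r}. \<beta> k' = Suc j")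
        case False
        then have "\<forall>c\<in>{0..<m}. ?P $$ (c,j) = 0"
          using PiMat_entry[OF _ ij(2) ia ib] by auto
        then show ?thesis using e by simp
      next
        case True
        then obtain k' where k': "k' \<in> {1..r}" "\<beta> k' = Suc j" by blast
        have "\<alpha> k' \<in> {1..m}" using al k'(1) by blast
        then have ak': "1 \<le> \<alpha> k'" "\<alpha> k' \<le> m" by auto
        define b where "b = \<alpha> k' - 1"
        have b: "b < m" "\<alpha> k' = Suc b" using ak' by (auto simp: b_def)
        have "k' \<noteq> k" using k k' by auto
        moreover have "\<not> k' < k"
        proof
          assume "k' < k"
          then have "k' \<in> {1..<k}" using k'(1) by simp
          then have "\<beta> k' \<in> \<beta> ` {1..<k}" by (rule imageI)
          with k'(2) k(4) show False by simp
        qed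
        ultimately have "k < k'" by simp
        then have "\<alpha> k < \<alpha> k'" using sm k(1) k'(1) by (auto simp: strict_mono_on_def)
        then have ab: "a < b" using a b by simp
        have "(\<Sum>c\<in>{0..<m}. L $$ (a,c) * ?P $$ (c,j)) = (\<Sum>c\<in>{0..<m}. if c = b then L $$ (a,c) else 0)"
        proof (rule sum.cong, simp)
          fix c assume c: "c \<in> {0..<m}"
          have "(\<exists>k''\<in>{1..r}. \<alpha> k'' = Suc c \<and> \<beta> k'' = Suc j) \<longleftrightarrow> c = b"
          proof
            assume "\<exists>k''\<in>{1..r}. \<alpha> k'' = Suc c \<and> \<beta> k'' = Suc j"
            then obtain k'' where k'': "k'' \<in> {1..r}" "\<alpha> k'' = Suc c" "\<beta> k'' = Suc j" by blast
            have "k'' = k'" using inj_onD[OF ib, of k'' k'] k''(1,3) k'(1,2) by simp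
            then show "c = b" using b(2) k''(2) by simp
          next
            assume "c = b" then show "\<exists>k''\<in>{1..r}. \<alpha> k'' = Suc c \<and> \<beta> k'' = Suc j"
              using k'(1,2) b(2) by metis
          qed
          then show "L $$ (a,c) * ?P $$ (c,j) = (if c = b then L $$ (a,c) else 0)"
            using PiMat_entry[OF _ ij(2) ia ib, of c] c by auto
        qed
        also have "\<dots> = L $$ (a,b)" using b by simp
        also have "\<dots> = N $$ (a,b)" using a b ab LN Nc by simp
        also have "\<dots> = 0"
        proof (rule ccontr)
          assume "N $$ (a,b) \<noteq> 0"
          from Ns[OF a(1) b(1) this] ab show False by (simp add: Pset_def)
        qed
        finally show ?thesis using e by simp
      qed
    qed
    from lhs rhs eq nz show False by simp
  qed
  show ?thesis
    by (rule eq_matI) (use RM Mc M0 in auto)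
qed

end
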